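(* Consider a pairwise spanner instance on a directed graph $G=(V,E)$ with uniform edge lengths and $k\ge 1$ terminal pairs, with optimal value $\mathsf{OPT}$. Then there exists a junction tree $J$ in $G$ with $D(J)\neq\emptyset$ and density $\rho(J)\le \mathsf{OPT}/\sqrt{k}$.
   Context: Pairwise spanner problem: given a directed graph $G=(V,E)$ with $\ell(e)=1$ for all $e$, terminal pairs $(s_i,t_i)$, $i\in[k]$, and target distances $d_i$ with $d_G(s_i,t_i)\le d_i$, find $F\subseteq E$ of minimum cardinality such that $(V,F)$ contains an $s_i\leadsto t_i$ path with at most $d_i$ edges for every $i$; $\mathsf{OPT}$ is this minimum. A junction tree rooted at $r\in V$ is a subgraph $J$ of $G$ that is the union of an in-arborescence $A^{in}$ rooted at $r$ (every vertex of it has a unique path to $r$ in it) and an out-arborescence $A^{out}$ rooted at $r$. A terminal pair $(s_i,t_i)$ is connected by $J$ if $s_i\in A^{in}$, $t_i\in A^{out}$, and the $s_i\leadsto r$ path in $A^{in}$ plus the $r\leadsto t_i$ path in $A^{out}$ have at most $d_i$ edges in total. $D(J)$ is the set of terminal pairs connected by $J$, and the density of $J$ is $\rho(J)=|E(J)|/|D(J)|$. *)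

theory Defs
  imports Complex_Main
begin

text \<open>All edges have unit length, so the length of a path is its number
of edges.\<close>

definition digraph :: "'a set \<Rightarrow> ('a \<times> 'a) set \<Rightarrow> bool" where
  "digraph V E \<longleftrightarrow> finite V \<and> E \<subseteq> V \<times> V"

definition has_path_le :: "('a \<times> 'a) set \<Rightarrow> 'a \<Rightarrow> 'a \<Rightarrow> nat \<Rightarrow> bool" where
  "has_path_le F u v d \<longleftrightarrow> (\<exists>n\<le>d. (u, v) \<in> F ^^ n)"

definition spanner_feasible ::
  "('a \<times> 'a) set \<Rightarrow> nat \<Rightarrow> (nat \<Rightarrow> 'a) \<Rightarrow> (nat \<Rightarrow> 'a) \<Rightarrow> (nat \<Rightarrow> nat) \<Rightarrow> ('a \<times> 'a) set \<Rightarrow> bool" where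
  "spanner_feasible E k s t d F \<longleftrightarrow> F \<subseteq> E \<and> (\<forall>i<k. has_path_le F (s i) (t i) (d i))"

definition spanner_OPT ::
  "('a \<times> 'a) set \<Rightarrow> nat \<Rightarrow> (nat \<Rightarrow> 'a) \<Rightarrow> (nat \<Rightarrow> 'a) \<Rightarrow> (nat \<Rightarrow> nat) \<Rightarrow> nat" where
  "spanner_OPT E k s t d = Min (card ` {F. spanner_feasible E k s t d F})"

definition verts :: "('a \<times> 'a) set \<Rightarrow> 'a \<Rightarrow> 'a set" where
  "verts A r = {r} \<union> fst ` A \<union> snd ` A"

definition in_arborescence :: "('a \<times> 'a) set \<Rightarrow> ('a \<times> 'a) set \<Rightarrow> 'a \<Rightarrow> bool" where
  "in_arborescence E A r \<longleftrightarrow> A \<subseteq> E \<and> (\<forall>e\<in>A. fst e \<noteq> r) \<and>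
     (\<forall>v \<in> verts A r - {r}. \<exists>!w. (v, w) \<in> A) \<and> (\<forall>v \<in> verts A r. (v, r) \<in> A\<^sup>*)"

definition out_arborescence :: "('a \<times> 'a) set \<Rightarrow> ('a \<times> 'a) set \<Rightarrow> 'a \<Rightarrow> bool" where
  "out_arborescence E A r \<longleftrightarrow> A \<subseteq> E \<and> (\<forall>e\<in>A. snd e \<noteq> r) \<and>
     (\<forall>v \<in> verts A r - {r}. \<exists>!u. (u, v) \<in> A) \<and> (\<forall>v \<in> verts A r. (r, v) \<in> A\<^sup>*)"

definition junction_tree :: "('a \<times> 'a) set \<Rightarrow> 'a \<Rightarrow> ('a \<times> 'a) set \<Rightarrow> ('a \<times> 'a) set \<Rightarrow> bool" where
  "junction_tree E r Ain Aout \<longleftrightarrow> in_arborescence E Ain r \<and> out_arborescence E Aout r"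

text \<open>D(J): indices of terminal pairs connected by J. In an arborescence the path
to/from the root is unique, so its length is the unique n with the relpow membership.\<close>
definition connected_pairs ::
  "nat \<Rightarrow> (nat \<Rightarrow> 'a) \<Rightarrow> (nat \<Rightarrow> 'a) \<Rightarrow> (nat \<Rightarrow> nat) \<Rightarrow> 'a \<Rightarrow> ('a \<times> 'a) set \<Rightarrow> ('a \<times> 'a) set \<Rightarrow> nat set" where
  "connected_pairs k s t d r Ain Aout =
     {i. i < k \<and> s i \<in> verts Ain r \<and> t i \<in> verts Aout r \<and>
         (\<exists>a b. (s i, r) \<in> Ain ^^ a \<and> (r, t i) \<in> Aout ^^ b \<and> a + b \<le> d i)}"

definition density ::
  "nat \<Rightarrow> (nat \<Rightarrow> 'a) \<Rightarrow> (nat \<Rightarrow> 'a) \<Rightarrow> (nat \<Rightarrow> nat) \<Rightarrow> 'a \<Rightarrow> ('a \<times> 'a) set \<Rightarrow> ('a \<times> 'a) set \<Rightarrow> real" where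
  "density k s t d r Ain Aout = real (card (Ain \<union> Aout)) / real (card (connected_pairs k s t d r Ain Aout))"

end

theory Submission
  imports Defs
begin

lemma relpow_conv_iff: "(a,b) \<in> ((R::('a\<times>'a) set)\<inverse>) ^^ n \<longleftrightarrow> (b,a) \<in> R ^^ n"
proof (induct n arbitrary: b)
  case 0 show ?case by auto
next
  case (Suc n)
  show ?case
  proof
    assume "(a,b) \<in> (R\<inverse>) ^^ Suc n"
    then obtain y where "(a,y) \<in> (R\<inverse>)^^n" "(y,b) \<in> R\<inverse>" by (rule relpow_Suc_E)
    then show "(b,a) \<in> R^^Suc n" using Suc relpow_Suc_I2 by fastforce
  next
    assume "(b,a) \<in> R ^^ Suc n"
    then obtain y where "(b,y) \<in> R" "(y,a) \<in> R^^n" by (rule relpow_Suc_E2)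
    then show "(a,b) \<in> (R\<inverse>)^^Suc n" using Suc relpow_Suc_I by fastforce
  qed
qed

lemma out_tree:
  fixes F :: "('a\<times>'a) set" and r :: 'a
  shows "\<exists>A. A \<subseteq> F \<and> (\<forall>e\<in>A. snd e \<noteq> r) \<and> (\<forall>v\<in>verts A r - {r}. \<exists>!u. (u,v)\<in>A)
     \<and> (\<forall>v\<in>verts A r. (r,v)\<in>A\<^sup>*)
     \<and> (\<forall>v n. (r,v)\<in>F^^n \<longrightarrow> v \<in> verts A r \<and> (\<exists>m\<le>n. (r,v)\<in>A^^m))"
proof -
  define R where "R = {v. \<exists>n. (r,v) \<in> F^^n}"
  define dist where "dist v = (LEAST n. (r,v) \<in> F^^n)" for v
  have dI: "(r,v) \<in> F^^(dist v)" if "v \<in> R" for v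
    using that unfolding R_def dist_def by (auto intro: LeastI_ex)
  have dle: "dist v \<le> n" if "(r,v) \<in> F^^n" for v n
    unfolding dist_def using that by (rule Least_le)
  have par: "\<exists>u. u \<in> R \<and> (u,v) \<in> F \<and> Suc (dist u) = dist v" if "v \<in> R" "v \<noteq> r" for v
  proof -
    have "dist v \<noteq> 0" using dI[OF that(1)] that(2) by (metis relpow_0_E)
    then obtain m where m: "dist v = Suc m" by (cases "dist v") auto
    with dI[OF that(1)] obtain u where u: "(r,u) \<in> F^^m" "(u,v) \<in> F" by (metis relpow_Suc_E)
    have uR: "u \<in> R" using u unfolding R_def by auto
    have "dist u \<le> m" using dle u by auto
    moreover have "dist v \<le> Suc (dist u)" using dle relpow_Suc_I[OF dI[OF uR] u(2)] by blast
    ultimately show ?thesis using uR u m by auto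
  qed
  define p where "p v = (SOME u. u \<in> R \<and> (u,v) \<in> F \<and> Suc (dist u) = dist v)" for v
  have pP: "p v \<in> R \<and> (p v,v) \<in> F \<and> Suc (dist (p v)) = dist v" if "v \<in> R" "v \<noteq> r" for v
    unfolding p_def using someI_ex[OF par[OF that]] .
  define A where "A = {(p v, v) | v. v \<in> R \<and> v \<noteq> r}"
  have rR: "r \<in> R" unfolding R_def using relpow_0_I[of r F] by blast
  have vR: "verts A r \<subseteq> R" unfolding verts_def A_def using rR pP by auto
  have reach: "\<forall>v. v \<in> R \<and> dist v = n \<longrightarrow> (r,v) \<in> A^^n" for n
  proof (induct n)
    case 0 show ?case
    proof (intro allI impI)
      fix v assume v: "v \<in> R \<and> dist v = 0"
      then have "(r,v) \<in> F^^0" using dI by metis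
      then have "v = r" by simp
      then show "(r,v) \<in> A^^0" by simp
    qed
  next
    case (Suc n)
    show ?case
    proof (intro allI impI)
      fix v assume v: "v \<in> R \<and> dist v = Suc n"
      then have "v \<noteq> r" using dle[OF relpow_0_I[of r F]] by auto
      with v pP[of v] have "p v \<in> R" "dist (p v) = n" by auto
      have pA: "(p v, v) \<in> A" unfolding A_def using v \<open>v \<noteq> r\<close> by blast
      have "(r, p v) \<in> A^^n" using Suc \<open>p v \<in> R\<close> \<open>dist (p v) = n\<close> by blast
      then show "(r,v) \<in> A^^Suc n" using pA by (rule relpow_Suc_I)
    qed
  qed
  have "A \<subseteq> F" unfolding A_def using pP by auto
  moreover have "\<forall>e\<in>A. snd e \<noteq> r" unfolding A_def by auto
  moreover have "\<forall>v\<in>verts A r - {r}. \<exists>!u. (u,v)\<in>A"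
  proof
    fix v assume v: "v \<in> verts A r - {r}"
    then have "v \<in> R" "v \<noteq> r" using vR by auto
    then show "\<exists>!u. (u,v)\<in>A" unfolding A_def by auto
  qed
  moreover have "\<forall>v\<in>verts A r. (r,v)\<in>A\<^sup>*"
    using vR reach relpow_imp_rtrancl by blast
  moreover have "\<forall>v n. (r,v)\<in>F^^n \<longrightarrow> v \<in> verts A r \<and> (\<exists>m\<le>n. (r,v)\<in>A^^m)"
  proof (intro allI impI)
    fix v n assume h: "(r,v) \<in> F^^n"
    then have v: "v \<in> R" unfolding R_def by auto
    have "v \<in> verts A r"
    proof (cases "v = r")
      case False then show ?thesis using v unfolding verts_def A_def by force
    qed (simp add: verts_def)
    then show "v \<in> verts A r \<and> (\<exists>m\<le>n. (r,v)\<in>A^^m)" using reach v dle[OF h] by blast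
  qed
  ultimately show ?thesis by blast
qed

lemma in_tree:
  fixes F :: "('a\<times>'a) set" and r :: 'a
  shows "\<exists>A. A \<subseteq> F \<and> (\<forall>e\<in>A. fst e \<noteq> r) \<and> (\<forall>v\<in>verts A r - {r}. \<exists>!w. (v,w)\<in>A)
     \<and> (\<forall>v\<in>verts A r. (v,r)\<in>A\<^sup>*)
     \<and> (\<forall>v n. (v,r)\<in>F^^n \<longrightarrow> v \<in> verts A r \<and> (\<exists>m\<le>n. (v,r)\<in>A^^m))"
proof -
  obtain B where B: "B \<subseteq> F\<inverse>" "\<forall>e\<in>B. snd e \<noteq> r" "\<forall>v\<in>verts B r - {r}. \<exists>!u. (u,v)\<in>B"
     "\<forall>v\<in>verts B r. (r,v)\<in>B\<^sup>*"
     "\<forall>v n. (r,v)\<in>(F\<inverse>)^^n \<longrightarrow> v \<in> verts B r \<and> (\<exists>m\<le>n. (r,v)\<in>B^^m)"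
    using out_tree[of "F\<inverse>" r] by blast
  have vv: "verts (B\<inverse>) r = verts B r" unfolding verts_def by force
  show ?thesis
    apply (rule exI[of _ "B\<inverse>"])
    using B unfolding vv
    by (auto simp: relpow_conv_iff rtrancl_converse)
qed


lemma walk_split:
  assumes "\<forall>j<n. (w j, w (Suc j)) \<in> F" "j < n"
  shows "(w 0, w j) \<in> F^^j" "(w j, w n) \<in> F^^(n-j)"
proof -
  show "(w 0, w j) \<in> F^^j" unfolding relpow_fun_conv
    by (rule exI[of _ w]) (use assms in auto)
  show "(w j, w n) \<in> F^^(n-j)" unfolding relpow_fun_conv
    by (rule exI[of _ "\<lambda>x. w (j + x)"]) (use assms in auto)
qed

lemma card_filter_sum: "finite A \<Longrightarrow> card {x\<in>A. Q x} = (\<Sum>x\<in>A. if Q x then 1 else 0)"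
  by (simp add: sum.inter_filter[symmetric])

theorem lemma4p3:
  fixes V :: "'a set" and E :: "('a \<times> 'a) set"
    and k :: nat and s t :: "nat \<Rightarrow> 'a" and d :: "nat \<Rightarrow> nat"
  assumes "digraph V E"
    and "k \<ge> 1"
    and "\<forall>i<k. s i \<in> V \<and> t i \<in> V"
    and "\<forall>i<k. has_path_le E (s i) (t i) (d i)"
  shows "\<exists>r Ain Aout. r \<in> V \<and> junction_tree E r Ain Aout
            \<and> connected_pairs k s t d r Ain Aout \<noteq> {}
            \<and> density k s t d r Ain Aout \<le> real (spanner_OPT E k s t d) / sqrt (real k)"
proof -
  have finV: "finite V" and EV: "E \<subseteq> V \<times> V" using assms(1) unfolding digraph_def by auto
  have finE: "finite E" using finV EV finite_subset by blast
  have fs: "finite {F. spanner_feasible E k s t d F}"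
    by (rule finite_subset[of _ "Pow E"]) (use finE in \<open>auto simp: spanner_feasible_def\<close>)
  have "E \<in> {F. spanner_feasible E k s t d F}" using assms(4) unfolding spanner_feasible_def by auto
  then have "spanner_OPT E k s t d \<in> card ` {F. spanner_feasible E k s t d F}"
    unfolding spanner_OPT_def using fs by (intro Min_in) auto
  then obtain F where Ff: "spanner_feasible E k s t d F" and FO: "card F = spanner_OPT E k s t d" by auto
  have FE: "F \<subseteq> E" using Ff unfolding spanner_feasible_def by auto
  have finF: "finite F" using FE finE finite_subset by blast
  have "\<forall>i\<in>{..<k}. \<exists>p. fst p \<le> d i \<and> snd p 0 = s i \<and> snd p (fst p) = t i \<and> (\<forall>j<fst p. (snd p j, snd p (Suc j)) \<in> F)"
  proof
    fix i assume "i \<in> {..<k}"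
    then obtain n where "n \<le> d i" "(s i, t i) \<in> F^^n" using Ff unfolding spanner_feasible_def has_path_le_def by auto
    then show "\<exists>p. fst p \<le> d i \<and> snd p 0 = s i \<and> snd p (fst p) = t i \<and> (\<forall>j<fst p. (snd p j, snd p (Suc j)) \<in> F)"
      unfolding relpow_fun_conv by (metis fst_conv snd_conv)
  qed
  then obtain g where g: "\<forall>i\<in>{..<k}. fst (g i) \<le> d i \<and> snd (g i) 0 = s i \<and> snd (g i) (fst (g i)) = t i \<and> (\<forall>j<fst (g i). (snd (g i) j, snd (g i) (Suc j)) \<in> F)"
    using bchoice by metis
  define N where "N i = fst (g i)" for i
  define W where "W i = snd (g i)" for i
  have NW: "N i \<le> d i" "W i 0 = s i" "W i (N i) = t i" "\<forall>j<N i. (W i j, W i (Suc j)) \<in> F" if "i < k" for i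
    using g that unfolding N_def W_def by auto
  define P where "P i = (\<lambda>j. (W i j, W i (Suc j))) ` {..<N i}" for i
  have finP: "finite (P i)" for i unfolding P_def by auto
  have PF: "P i \<subseteq> F" if "i < k" for i unfolding P_def using NW[OF that] by auto
  have cardP: "card (P i) \<le> N i" for i unfolding P_def using card_image_le by fastforce
  have pathP: "(s i, t i) \<in> (P i)^^(N i)" if "i < k" for i
    unfolding relpow_fun_conv P_def using NW[OF that] by (intro exI[of _ "W i"]) auto
  define c where "c e = card {i\<in>{..<k}. e \<in> P i}" for e
  have dc: "(\<Sum>e\<in>F. c e) = (\<Sum>i<k. card (P i))"
  proof -
    have "(\<Sum>e\<in>F. c e) = (\<Sum>e\<in>F. \<Sum>i<k. if e \<in> P i then 1 else 0)"
      unfolding c_def by (rule sum.cong[OF refl], rule card_filter_sum) simp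
    also have "\<dots> = (\<Sum>i<k. \<Sum>e\<in>F. if e \<in> P i then 1 else 0)" by (rule sum.swap)
    also have "\<dots> = (\<Sum>i<k. card (P i))"
    proof (rule sum.cong)
      fix i assume "i \<in> {..<k}"
      then have "{e\<in>F. e \<in> P i} = P i" using PF by auto
      then show "(\<Sum>e\<in>F. if e \<in> P i then 1 else 0) = card (P i)"
        using card_filter_sum[OF finF, of "\<lambda>e. e \<in> P i"] by simp
    qed simp
    finally show ?thesis .
  qed
  have sk: "sqrt (real k) > 0" using assms(2) by simp
  have finD: "finite (connected_pairs k s t d r Ain Aout)" for r Ain Aout
    by (rule finite_subset[of _ "{..<k}"]) (auto simp: connected_pairs_def)
  show ?thesis
  proof (cases "\<exists>e\<in>F. sqrt (real k) \<le> real (c e)")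
    case True
    then obtain u v where uvF: "(u,v) \<in> F" and cu: "sqrt (real k) \<le> real (c (u,v))" by auto
    have uV: "u \<in> V" using uvF FE EV by auto
    obtain Aout where Ao: "Aout \<subseteq> F" "\<forall>e\<in>Aout. snd e \<noteq> u" "\<forall>v\<in>verts Aout u - {u}. \<exists>!w. (w,v)\<in>Aout"
      "\<forall>v\<in>verts Aout u. (u,v)\<in>Aout\<^sup>*" "\<forall>v n. (u,v)\<in>F^^n \<longrightarrow> v \<in> verts Aout u \<and> (\<exists>m\<le>n. (u,v)\<in>Aout^^m)"
      using out_tree[of F u] by blast
    obtain Ain where Ai: "Ain \<subseteq> F" "\<forall>e\<in>Ain. fst e \<noteq> u" "\<forall>v\<in>verts Ain u - {u}. \<exists>!w. (v,w)\<in>Ain"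
      "\<forall>v\<in>verts Ain u. (v,u)\<in>Ain\<^sup>*" "\<forall>v n. (v,u)\<in>F^^n \<longrightarrow> v \<in> verts Ain u \<and> (\<exists>m\<le>n. (v,u)\<in>Ain^^m)"
      using in_tree[of F u] by blast
    have jt: "junction_tree E u Ain Aout"
      unfolding junction_tree_def in_arborescence_def out_arborescence_def using Ao Ai FE by blast
    define D where "D = connected_pairs k s t d u Ain Aout"
    have sub: "{i\<in>{..<k}. (u,v) \<in> P i} \<subseteq> D"
    proof
      fix i assume "i \<in> {i\<in>{..<k}. (u,v) \<in> P i}"
      then have ik: "i < k" and "(u,v) \<in> P i" by auto
      then obtain j where j: "j < N i" "u = W i j" unfolding P_def by auto
      have p1: "(s i, u) \<in> F^^j" using walk_split(1)[OF NW(4)[OF ik] j(1)] j NW(2)[OF ik] by simp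
      have p2: "(u, t i) \<in> F^^(N i - j)" using walk_split(2)[OF NW(4)[OF ik] j(1)] j NW(3)[OF ik] by simp
      obtain a where a: "a \<le> j" "(s i, u) \<in> Ain^^a" "s i \<in> verts Ain u" using Ai(5) p1 by blast
      obtain b where b: "b \<le> N i - j" "(u, t i) \<in> Aout^^b" "t i \<in> verts Aout u" using Ao(5) p2 by blast
      have "a + b \<le> d i" using a(1) b(1) j(1) NW(1)[OF ik] by linarith
      then show "i \<in> D" unfolding D_def connected_pairs_def using ik a b by blast
    qed
    have cD: "real (c (u,v)) \<le> real (card D)"
      unfolding c_def using card_mono[OF _ sub] finD unfolding D_def by auto
    have cJ: "real (card (Ain \<union> Aout)) \<le> real (card F)"
      using card_mono[OF finF] Ai(1) Ao(1) by auto
    have "density k s t d u Ain Aout = real (card (Ain \<union> Aout)) / real (card D)"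
      unfolding density_def D_def by simp
    also have "\<dots> \<le> real (card F) / sqrt (real k)"
      by (rule frac_le) (use cJ cD cu sk in auto)
    finally have den: "density k s t d u Ain Aout \<le> real (spanner_OPT E k s t d) / sqrt (real k)"
      using FO by simp
    have "D \<noteq> {}" using cD cu sk by auto
    then show ?thesis using uV jt den unfolding D_def by blast
  next
    case False
    then have cl: "\<forall>e\<in>F. real (c e) \<le> sqrt (real k)" by auto
    have "\<exists>i<k. real (card (P i)) \<le> real (card F) / sqrt (real k)"
    proof (rule ccontr)
      assume "\<not> ?thesis"
      then have h: "\<forall>i\<in>{..<k}. real (card F) / sqrt (real k) < real (card (P i))" by auto
      have "(\<Sum>i<k. real (card F) / sqrt (real k)) < (\<Sum>i<k. real (card (P i)))"
        by (rule sum_strict_mono) (use h assms(2) in \<open>auto simp: lessThan_empty_iff\<close>)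
      also have "\<dots> = real (\<Sum>e\<in>F. c e)" using dc by simp
      also have "\<dots> = (\<Sum>e\<in>F. real (c e))" by simp
      also have "\<dots> \<le> (\<Sum>e\<in>F. sqrt (real k))" by (rule sum_mono) (use cl in auto)
      finally have "real k * (real (card F) / sqrt (real k)) < real (card F) * sqrt (real k)" by simp
      moreover have "real k = sqrt (real k) * sqrt (real k)" by simp
      ultimately show False using sk by (simp add: field_simps)
    qed
    then obtain i where ik: "i < k" and ci: "real (card (P i)) \<le> real (card F) / sqrt (real k)" by auto
    obtain Aout where Ao: "Aout \<subseteq> P i" "\<forall>e\<in>Aout. snd e \<noteq> s i" "\<forall>v\<in>verts Aout (s i) - {s i}. \<exists>!w. (w,v)\<in>Aout"
      "\<forall>v\<in>verts Aout (s i). (s i,v)\<in>Aout\<^sup>*" "\<forall>v n. (s i,v)\<in>(P i)^^n \<longrightarrow> v \<in> verts Aout (s i) \<and> (\<exists>m\<le>n. (s i,v)\<in>Aout^^m)"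
      using out_tree[of "P i" "s i"] by blast
    have ia: "in_arborescence E {} (s i)"
      unfolding in_arborescence_def verts_def by simp
    have jt: "junction_tree E (s i) {} Aout"
      unfolding junction_tree_def out_arborescence_def using ia Ao PF[OF ik] FE by blast
    define D where "D = connected_pairs k s t d (s i) {} Aout"
    obtain b where b: "b \<le> N i" "(s i, t i) \<in> Aout^^b" "t i \<in> verts Aout (s i)" using Ao(5) pathP[OF ik] by blast
    have "(s i, s i) \<in> ({}::('a\<times>'a) set)^^0" by simp
    moreover have "s i \<in> verts {} (s i)" by (simp add: verts_def)
    moreover have "0 + b \<le> d i" using b NW(1)[OF ik] by simp
    ultimately have "i \<in> D" unfolding D_def connected_pairs_def using ik b by blast
    then have D1: "1 \<le> real (card D)" using finD[of "s i" "{}" Aout] unfolding D_def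
      by (metis card_0_eq empty_iff less_one not_le of_nat_1 of_nat_le_iff)
    have cJ: "real (card ({} \<union> Aout)) \<le> real (card (P i))"
      using card_mono[OF finP] Ao(1) by auto
    have "density k s t d (s i) {} Aout = real (card ({} \<union> Aout)) / real (card D)"
      unfolding density_def D_def by simp
    also have "\<dots> \<le> real (card (P i)) / 1"
      by (rule frac_le) (use cJ D1 in auto)
    also have "\<dots> \<le> real (card F) / sqrt (real k)" using ci by simp
    finally have den: "density k s t d (s i) {} Aout \<le> real (spanner_OPT E k s t d) / sqrt (real k)"
      using FO by simp
    have "D \<noteq> {}" using \<open>i \<in> D\<close> by auto
    moreover have "s i \<in> V" using assms(3) ik by auto
    ultimately show ?thesis using jt den unfolding D_def by blast
  qed
qed

end
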